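(* Let $\mathcal{H}$ be a Hilbert space with a unit vector $\xi$ and expectation functional $\phi(T)=\langle T\xi,\xi\rangle$. Let $P,Q$ be Boolean independent orthogonal projections on $(\mathcal{H},\xi)$ with $\phi(P)=1-p$ and $\phi(Q)=1-q$, where $p,q\in[0,1]$. Then $\phi(P\vee Q)=1-r$, where $r\in[0,1]$ is determined by $$r^{-1}-1=(p^{-1}-1)+(q^{-1}-1).$$
   Context: Noncommutative random variables are self-adjoint operators on $\mathcal{H}$, with distribution taken with respect to $\phi$. Two families of bounded self-adjoint operators are Boolean independent with respect to $\phi$ if, denoting by $\mathcal{A}$ and $\mathcal{B}$ the (non-unital) $*$-algebras they generate, one has $\phi(c_1c_2\cdots c_n)=\phi(c_1)\phi(c_2)\cdots\phi(c_n)$ whenever each $c_i$ lies in $\mathcal{A}$ or in $\mathcal{B}$ and consecutive $c_i$ alternate between $\mathcal{A}$ and $\mathcal{B}$. For projections $P,Q$, $P\vee Q$ denotes the spectral (Ando) max, i.e. the projection $I-\big((I-P)\wedge(I-Q)\big)$, where $\wedge$ is the orthogonal projection onto the intersection of ranges; equivalently the orthogonal projection onto the closed span of the ranges of $P$ and $Q$. Convention: $0^{-1}=+\infty$ and $(+\infty)^{-1}=0$. *)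

theory Defs
  imports "HOL-Analysis.Analysis" "HOL-Library.Extended_Real"
begin

text \<open>Operators on a (real) Hilbert space 'a are modelled as functions 'a \<Rightarrow> 'a.\<close>

definition is_orth_proj :: "('a::real_inner \<Rightarrow> 'a) \<Rightarrow> bool" where
  "is_orth_proj P \<longleftrightarrow> bounded_linear P \<and> P \<circ> P = P \<and>
     (\<forall>x y. inner (P x) y = inner x (P y))"

definition vstate :: "'a::real_inner \<Rightarrow> ('a \<Rightarrow> 'a) \<Rightarrow> real" where
  "vstate \<xi> T = inner (T \<xi>) \<xi>"

inductive_set star_alg :: "('a::real_inner \<Rightarrow> 'a) set \<Rightarrow> ('a \<Rightarrow> 'a) set"
  for S :: "('a \<Rightarrow> 'a) set" where
  gen: "T \<in> S \<Longrightarrow> T \<in> star_alg S"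
| add: "T \<in> star_alg S \<Longrightarrow> U \<in> star_alg S \<Longrightarrow> (\<lambda>x. T x + U x) \<in> star_alg S"
| scale: "T \<in> star_alg S \<Longrightarrow> (\<lambda>x. c *\<^sub>R T x) \<in> star_alg S"
| mult: "T \<in> star_alg S \<Longrightarrow> U \<in> star_alg S \<Longrightarrow> T \<circ> U \<in> star_alg S"
| adj: "T \<in> star_alg S \<Longrightarrow> (\<forall>x y. inner (T x) y = inner x (T' y)) \<Longrightarrow> T' \<in> star_alg S"

definition boolean_indep :: "'a::real_inner \<Rightarrow> ('a \<Rightarrow> 'a) set \<Rightarrow> ('a \<Rightarrow> 'a) set \<Rightarrow> bool" where
  "boolean_indep \<xi> A B \<longleftrightarrow>
    (\<forall>cs. cs \<noteq> [] \<and>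
       ((\<forall>i<length cs. cs ! i \<in> (if even i then A else B)) \<or>
        (\<forall>i<length cs. cs ! i \<in> (if even i then B else A))) \<longrightarrow>
       vstate \<xi> (foldr (\<circ>) cs id) = prod_list (map (vstate \<xi>) cs))"

definition boolean_indep_ops :: "'a::real_inner \<Rightarrow> ('a \<Rightarrow> 'a) set \<Rightarrow> ('a \<Rightarrow> 'a) set \<Rightarrow> bool" where
  "boolean_indep_ops \<xi> F G \<longleftrightarrow> boolean_indep \<xi> (star_alg F) (star_alg G)"

definition proj_sup :: "('a::real_inner \<Rightarrow> 'a) \<Rightarrow> ('a \<Rightarrow> 'a) \<Rightarrow> ('a \<Rightarrow> 'a)" where
  "proj_sup P Q = (THE R. is_orth_proj R \<and> range R = closure (span (range P \<union> range Q)))"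

definition einv :: "real \<Rightarrow> ereal" where
  "einv x = (if x = 0 then \<infinity> else ereal (1 / x))"

end

theory Submission
  imports Defs
begin


lemma subspace_closure_aux:
  fixes S :: "'a::real_normed_vector set"
  assumes "subspace S"
  shows "subspace (closure S)"
proof -
  have add: "(\<lambda>z. fst z + snd z) ` closure (S \<times> S) \<subseteq> closure S"
    apply (rule image_closure_subset)
      apply (intro continuous_intros)
     apply simp
    using assms by (auto simp: subspace_def intro!: closure_subset[THEN subsetD])
  have sc: "(\<lambda>z. c *\<^sub>R z) ` closure S \<subseteq> closure S" for c
    apply (rule image_closure_subset)
      apply (intro continuous_intros)
     apply simp
    using assms by (auto simp: subspace_def intro!: closure_subset[THEN subsetD])
  show ?thesis unfolding subspace_def
  proof (intro conjI ballI allI)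
    show "0 \<in> closure S" using assms by (auto simp: subspace_def intro!: closure_subset[THEN subsetD])
    fix x y assume "x \<in> closure S" "y \<in> closure S"
    then show "x + y \<in> closure S" using add by (force simp: closure_Times)
  next
    fix c x assume "x \<in> closure S" then show "c *\<^sub>R x \<in> closure S" using sc by blast
  qed
qed

lemma parallelogram:
  fixes u v :: "'a::real_inner"
  shows "norm (u - v)^2 + norm (u + v)^2 = 2 * norm u^2 + 2 * norm v^2"
  by (simp add: power2_norm_eq_inner inner_commute algebra_simps)

lemma proj_exists:
  fixes M :: "'a::{real_inner,complete_space} set"
  assumes sub: "subspace M" and cl: "closed M"
  shows "\<exists>m\<in>M. \<forall>y\<in>M. inner (x - m) y = 0"
proof -
  define d where "d = infdist x M"
  have Mne: "M \<noteq> {}" using sub by (auto simp: subspace_def)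
  have d0: "d \<ge> 0" unfolding d_def by (rule infdist_nonneg)
  have dle: "d \<le> dist x y" if "y \<in> M" for y unfolding d_def using infdist_le[OF that] .
  have "\<exists>y\<in>M. dist x y ^ 2 < d^2 + inverse (real (Suc n))" for n
  proof -
    let ?t = "sqrt (d^2 + inverse (real (Suc n)))"
    have "d^2 < d^2 + inverse (real (Suc n))" by simp
    hence "sqrt (d^2) < ?t" by (rule real_sqrt_less_mono)
    hence "d < ?t" using d0 by simp
    hence "(INF a\<in>M. dist x a) < ?t" using infdist_notempty[OF Mne] d_def Mne by simp
    then obtain y where y: "y \<in> M" "dist x y < ?t"
      using Mne by (subst (asm) cINF_less_iff) (auto intro!: bdd_belowI[where m=0])
    have "dist x y ^2 < ?t ^2" using y(2) by (intro power_strict_mono) auto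
    thus ?thesis using y(1) by (auto intro!: bexI[of _ y])
  qed
  then obtain f where f: "\<And>n. f n \<in> M" "\<And>n. dist x (f n) ^ 2 < d^2 + inverse (real (Suc n))"
    by metis
  have key: "norm (f n - f k) ^ 2 \<le> 2 * inverse (real (Suc n)) + 2 * inverse (real (Suc k))" for n k
  proof -
    have mid: "(1/2) *\<^sub>R (f n + f k) \<in> M" using f(1) sub by (simp add: subspace_add subspace_scale)
    have "d \<le> dist x ((1/2) *\<^sub>R (f n + f k))" using dle[OF mid] .
    hence "d^2 \<le> norm (x - (1/2) *\<^sub>R (f n + f k))^2" using d0 by (simp add: dist_norm power_mono)
    moreover have "norm ((x - f n) + (x - f k)) = 2 * norm (x - (1/2) *\<^sub>R (f n + f k))"
    proof -
      have "(x - f n) + (x - f k) = 2 *\<^sub>R (x - (1/2) *\<^sub>R (f n + f k))" by (simp add: algebra_simps scaleR_2)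
      thus ?thesis by simp
    qed
    moreover have "(x - f n) - (x - f k) = f k - f n" by simp
    moreover note parallelogram[of "x - f n" "x - f k"]
    moreover note f(2)[of n] f(2)[of k]
    ultimately show ?thesis by (simp add: dist_norm norm_minus_commute power_mult_distrib)
  qed
  have "Cauchy f"
  proof (rule metric_CauchyI)
    fix e :: real assume e: "e > 0"
    obtain N where N: "inverse (real (Suc N)) < e^2 / 4"
      using e by (metis divide_pos_pos reals_Archimedean zero_less_numeral zero_less_power)
    show "\<exists>N. \<forall>m\<ge>N. \<forall>n\<ge>N. dist (f m) (f n) < e"
    proof (intro exI allI impI)
      fix m n assume mn: "N \<le> m" "N \<le> n"
      have im: "inverse (real (Suc m)) \<le> inverse (real (Suc N))" using mn by (simp add: le_imp_inverse_le)
      have inn: "inverse (real (Suc n)) \<le> inverse (real (Suc N))" using mn by (simp add: le_imp_inverse_le)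
      have "dist (f m) (f n) ^ 2 < e ^ 2" using key[of m n] im inn N unfolding dist_norm by linarith
      thus "dist (f m) (f n) < e" using e by (simp add: power_less_imp_less_base)
    qed
  qed
  then obtain m where lim: "f \<longlonglongrightarrow> m" using convergent_eq_Cauchy convergent_def by blast
  have mM: "m \<in> M" using closed_sequentially[OF cl] f(1) lim by blast
  have "dist x m ^ 2 \<le> d^2 + 0"
  proof (rule LIMSEQ_le)
    show "(\<lambda>n. dist x (f n) ^ 2) \<longlonglongrightarrow> dist x m ^ 2" by (intro tendsto_intros lim)
    show "(\<lambda>n. d^2 + inverse (real (Suc n))) \<longlonglongrightarrow> d^2 + 0"
      by (intro tendsto_intros LIMSEQ_inverse_real_of_nat)
    show "\<exists>N. \<forall>n\<ge>N. dist x (f n) ^ 2 \<le> d^2 + inverse (real (Suc n))"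
      using f(2) less_imp_le by blast
  qed
  hence mopt: "norm (x - m)^2 \<le> norm (x - y)^2" if "y \<in> M" for y
    using dle[OF that] d0 by (simp add: dist_norm)
  show ?thesis
  proof (intro bexI[OF _ mM] ballI)
    fix y assume y: "y \<in> M"
    define c where "c = inner (x - m) y"
    define s where "s = inner y y"
    show "inner (x - m) y = 0"
    proof (cases "y = 0")
      case True thus ?thesis by simp
    next
      case False
      hence s: "s > 0" unfolding s_def by simp
      define t where "t = c / s"
      have "m + t *\<^sub>R y \<in> M" using sub mM y by (simp add: subspace_add subspace_scale)
      from mopt[OF this] have "norm (x - m)^2 \<le> norm ((x - m) - t *\<^sub>R y)^2" by (simp add: algebra_simps)
      also have "\<dots> = norm (x - m)^2 - 2 * t * c + t^2 * s"
        by (simp only: power2_norm_eq_inner inner_diff_left inner_diff_right inner_scaleR_left inner_scaleR_right) (simp add: c_def s_def inner_commute power2_eq_square algebra_simps)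
      finally have "0 \<le> t * (t * s - 2 * c)" by (simp add: algebra_simps power2_eq_square)
      also have "t * (t * s - 2 * c) = - (c^2 / s)" using s by (simp add: t_def field_simps power2_eq_square)
      finally have "c^2 / s \<le> 0" by simp
      hence "c^2 \<le> 0" using s by (simp add: divide_le_0_iff)
      hence "c = 0" by simp
      thus ?thesis unfolding c_def .
    qed
  qed
qed


lemma orth_proj_exists:
  fixes M :: "'a::{real_inner,complete_space} set"
  assumes sub: "subspace M" and cl: "closed M"
  shows "\<exists>R. is_orth_proj R \<and> range R = M"
proof -
  define C where "C x m \<longleftrightarrow> m \<in> M \<and> (\<forall>y\<in>M. inner (x - m) y = 0)" for x m
  define R where "R x = (SOME m. C x m)" for x
  have RC: "C x (R x)" for x
  proof -
    have "\<exists>m. C x m" using proj_exists[OF sub cl, of x] by (auto simp: C_def)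
    thus ?thesis unfolding R_def by (rule someI_ex)
  qed
  have uniq: "m1 = m2" if "C x m1" "C x m2" for x m1 m2
  proof -
    have "m1 - m2 \<in> M" using that sub by (simp add: C_def subspace_diff)
    hence "inner (x - m2) (m1 - m2) = 0" "inner (x - m1) (m1 - m2) = 0" using that by (auto simp: C_def)
    hence "inner (m1 - m2) (m1 - m2) = 0" by (simp add: inner_diff algebra_simps)
    thus ?thesis by simp
  qed
  have RM: "R x \<in> M" for x using RC C_def by blast
  have Rorth: "inner (x - R x) y = 0" if "y \<in> M" for x y using RC C_def that by blast
  have Rid: "R m = m" if "m \<in> M" for m
    using uniq[OF RC, of m m] that by (simp add: C_def)
  have add: "R (x + y) = R x + R y" for x y
  proof (rule uniq[OF RC])
    show "C (x + y) (R x + R y)" unfolding C_def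
    proof (intro conjI ballI)
      show "R x + R y \<in> M" using RM sub by (simp add: subspace_add)
      fix z assume z: "z \<in> M"
      have "inner (x + y - (R x + R y)) z = inner (x - R x) z + inner (y - R y) z"
        by (simp add: inner_diff inner_add algebra_simps)
      thus "inner (x + y - (R x + R y)) z = 0" using Rorth[OF z] by simp
    qed
  qed
  have scale: "R (c *\<^sub>R x) = c *\<^sub>R R x" for c x
  proof (rule uniq[OF RC])
    show "C (c *\<^sub>R x) (c *\<^sub>R R x)" unfolding C_def
    proof (intro conjI ballI)
      show "c *\<^sub>R R x \<in> M" using RM sub by (simp add: subspace_scale)
      fix z assume z: "z \<in> M"
      have "inner (c *\<^sub>R x - c *\<^sub>R R x) z = c * inner (x - R x) z"
        by (simp add: inner_diff algebra_simps)
      thus "inner (c *\<^sub>R x - c *\<^sub>R R x) z = 0" using Rorth[OF z] by simp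
    qed
  qed
  have normle: "norm (R x) \<le> norm x * 1" for x
  proof -
    have o: "inner (x - R x) (R x) = 0" using Rorth RM by blast
    have "norm (R x + (x - R x))^2 = norm (R x)^2 + norm (x - R x)^2"
      by (rule norm_add_Pythagorean) (metis orthogonal_def o inner_commute)
    hence "norm (R x)^2 \<le> norm x^2" by simp
    from power2_le_imp_le[OF this norm_ge_zero] show ?thesis by simp
  qed
  have bl: "bounded_linear R" by (rule bounded_linear_intro[OF add scale normle])
  have idem: "R \<circ> R = R" by (rule ext) (simp add: Rid[OF RM])
  have sa: "inner (R x) y = inner x (R y)" for x y
  proof -
    have o1: "inner (y - R y) (R x) = 0" using Rorth RM by blast
    have o2: "inner (x - R x) (R y) = 0" using Rorth RM by blast
    have "inner (R x) y = inner (R x) (R y)"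
      using o1 by (simp only: inner_diff_left) (metis inner_commute eq_iff_diff_eq_0)
    moreover have "inner x (R y) = inner (R x) (R y)"
      using o2 by (simp add: inner_diff_left)
    ultimately show ?thesis by simp
  qed
  have "range R = M"
  proof (intro equalityI subsetI)
    fix z assume "z \<in> range R" thus "z \<in> M" using RM by auto
  next
    fix z assume "z \<in> M" hence "z = R z" using Rid by simp
    thus "z \<in> range R" by (rule range_eqI)
  qed
  thus ?thesis using bl idem sa unfolding is_orth_proj_def by blast
qed

lemma orth_proj_unique:
  fixes R1 R2 :: "'a::real_inner \<Rightarrow> 'a"
  assumes "is_orth_proj R1" "is_orth_proj R2" "range R1 = range R2"
  shows "R1 = R2"
proof
  fix x
  have l1: "linear R1" using assms(1) unfolding is_orth_proj_def using bounded_linear.linear by blast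
  have fix1: "R1 z = z" if zr: "z \<in> range R1" for z
  proof -
    obtain w where "z = R1 w" using zr by blast
    moreover have "R1 (R1 w) = R1 w" using assms(1) unfolding is_orth_proj_def by (simp add: fun_eq_iff)
    ultimately show ?thesis by simp
  qed
  have fix2: "R2 z = z" if zr: "z \<in> range R2" for z
  proof -
    obtain w where "z = R2 w" using zr by blast
    moreover have "R2 (R2 w) = R2 w" using assms(2) unfolding is_orth_proj_def by (simp add: fun_eq_iff)
    ultimately show ?thesis by simp
  qed
  have orth1: "inner (x - R1 x) z = 0" if "z \<in> range R1" for z
  proof -
    have "inner (x - R1 x) z = inner (x - R1 x) (R1 z)" using fix1[OF that] by simp
    also have "\<dots> = inner (R1 (x - R1 x)) z" using assms(1) unfolding is_orth_proj_def by simp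
    also have "R1 (x - R1 x) = 0" using fix1[of "R1 x"] l1 by (simp add: linear_diff)
    finally show ?thesis by simp
  qed
  have orth2: "inner (x - R2 x) z = 0" if "z \<in> range R2" for z
  proof -
    have "inner (x - R2 x) z = inner (x - R2 x) (R2 z)" using fix2[OF that] by simp
    also have "\<dots> = inner (R2 (x - R2 x)) z" using assms(2) unfolding is_orth_proj_def by simp
    also have "R2 (x - R2 x) = 0" using fix2[of "R2 x"] assms(2) unfolding is_orth_proj_def
      by (simp add: linear_diff bounded_linear.linear)
    finally show ?thesis by simp
  qed
  define d where "d = R1 x - R2 x"
  have "R1 (R2 x) = R2 x" using fix1 assms(3) by auto
  hence "d = R1 (x - R2 x)" using l1 by (simp add: d_def linear_diff)
  hence d1: "d \<in> range R1" by simp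
  have "inner d d = inner (x - R2 x) d - inner (x - R1 x) d" by (simp add: d_def inner_diff algebra_simps)
  also have "\<dots> = 0" using orth1[OF d1] orth2 d1 assms(3) by simp
  finally show "R1 x = R2 x" by (simp add: d_def)
qed

lemma proj_sup_props:
  fixes P Q :: "'a::{real_inner,complete_space} \<Rightarrow> 'a"
  shows "is_orth_proj (proj_sup P Q) \<and> range (proj_sup P Q) = closure (span (range P \<union> range Q))"
proof -
  let ?M = "closure (span (range P \<union> range Q))"
  have "subspace ?M" by (rule subspace_closure_aux) (rule subspace_span)
  from orth_proj_exists[OF this closed_closure] obtain R where R: "is_orth_proj R" "range R = ?M" by blast
  have "\<exists>!R. is_orth_proj R \<and> range R = ?M"
  proof (rule ex1I[of _ R])
    show "is_orth_proj R \<and> range R = ?M" using R by blast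
    fix R' assume "is_orth_proj R' \<and> range R' = ?M"
    thus "R' = R" using R by (intro orth_proj_unique) auto
  qed
  from theI'[OF this] show ?thesis unfolding proj_sup_def .
qed



lemma op_sa: "is_orth_proj P \<Longrightarrow> inner (P x) y = inner x (P y)"
  unfolding is_orth_proj_def by blast
lemma op_idem: "is_orth_proj P \<Longrightarrow> P (P x) = P x"
  unfolding is_orth_proj_def by (metis comp_apply)
lemma op_lin: "is_orth_proj P \<Longrightarrow> linear P"
  unfolding is_orth_proj_def using bounded_linear.linear by blast
lemma op_norm: "is_orth_proj P \<Longrightarrow> inner (P x) (P y) = inner (P x) y"
  by (metis op_sa op_idem)
lemma op_range: "is_orth_proj P \<Longrightarrow> z \<in> range P \<Longrightarrow> P z = z"
  using op_idem by blast

lemma einv_m1: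
  assumes "p \<in> {0..1::real}"
  shows "einv p - 1 = (if p = 0 then \<infinity> else ereal (1/p - 1))" and "p \<noteq> 0 \<Longrightarrow> 1/p - 1 \<ge> 0"
proof -
  show "einv p - 1 = (if p = 0 then \<infinity> else ereal (1/p - 1))"
    by (simp add: einv_def one_ereal_def)
  assume "p \<noteq> 0"
  hence "p > 0" using assms by auto
  thus "1/p - 1 \<ge> 0" using assms by (simp add: field_simps)
qed

lemma r_part:
  fixes p q :: real
  assumes p: "p \<in> {0..1}" and q: "q \<in> {0..1}"
  defines "r0 \<equiv> (if p = 0 \<or> q = 0 then 0 else 1 / (1/p + 1/q - 1))"
  shows "r0 \<in> {0..1} \<and> (\<forall>r\<in>{0..1}. einv r - 1 = (einv p - 1) + (einv q - 1) \<longleftrightarrow> r = r0)"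
proof (cases "p = 0 \<or> q = 0")
  case True
  have rhs: "(einv p - 1) + (einv q - 1) = \<infinity>"
    using True einv_m1[OF p] einv_m1[OF q] by auto
  show ?thesis
  proof (intro conjI ballI)
    show "r0 \<in> {0..1}" using True r0_def by simp
    fix r :: real assume r: "r \<in> {0..1}"
    show "einv r - 1 = (einv p - 1) + (einv q - 1) \<longleftrightarrow> r = r0"
      using rhs einv_m1(1)[OF r] True r0_def by auto
  qed
next
  case False
  hence p0: "p > 0" and q0: "q > 0" using p q by auto
  have ip: "1/p \<ge> 1" using p0 p by (simp add: field_simps)
  have iq: "1/q \<ge> 1" using q0 q by (simp add: field_simps)
  define s where "s = 1/p + 1/q - 1"
  have s1: "s \<ge> 1" using ip iq s_def by simp
  have r0s: "r0 = 1 / s" using False r0_def s_def by simp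
  have rhs: "(einv p - 1) + (einv q - 1) = ereal (s - 1)"
    using False einv_m1(1)[OF p] einv_m1(1)[OF q] s_def by simp
  show ?thesis
  proof (intro conjI ballI)
    show "r0 \<in> {0..1}" using r0s s1 by simp
    fix r :: real assume r: "r \<in> {0..1}"
    show "einv r - 1 = (einv p - 1) + (einv q - 1) \<longleftrightarrow> r = r0"
    proof (cases "r = 0")
      case True thus ?thesis using rhs einv_m1(1)[OF r] r0s s1 by auto
    next
      case False
      have "einv r - 1 = (einv p - 1) + (einv q - 1) \<longleftrightarrow> 1/r - 1 = s - 1"
        using rhs einv_m1(1)[OF r] False by simp
      also have "\<dots> \<longleftrightarrow> r = 1 / s" using False s1 by (auto simp: field_simps)
      finally show ?thesis using r0s by simp
    qed
  qed
qed

lemma indep_facts: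
  fixes \<xi> :: "'a::real_inner"
  assumes "boolean_indep_ops \<xi> {P} {Q}"
  shows "inner (P (Q \<xi>)) \<xi> = vstate \<xi> P * vstate \<xi> Q"
    and "inner (Q (P (Q \<xi>))) \<xi> = vstate \<xi> Q * vstate \<xi> P * vstate \<xi> Q"
proof -
  have bi: "boolean_indep \<xi> (star_alg {P}) (star_alg {Q})"
    using assms unfolding boolean_indep_ops_def .
  have PA: "P \<in> star_alg {P}" and QB: "Q \<in> star_alg {Q}" by (auto intro: star_alg.gen)
  have "vstate \<xi> (foldr (\<circ>) [P, Q] id) = prod_list (map (vstate \<xi>) [P, Q])"
    using bi PA QB unfolding boolean_indep_def
    by (elim allE[of _ "[P, Q]"]) (auto simp: less_Suc_eq)
  thus "inner (P (Q \<xi>)) \<xi> = vstate \<xi> P * vstate \<xi> Q" by (simp add: vstate_def)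
  have "vstate \<xi> (foldr (\<circ>) [Q, P, Q] id) = prod_list (map (vstate \<xi>) [Q, P, Q])"
    using bi PA QB unfolding boolean_indep_def
    by (elim allE[of _ "[Q, P, Q]"]) (auto simp: less_Suc_eq numeral_eq_Suc)
  thus "inner (Q (P (Q \<xi>))) \<xi> = vstate \<xi> Q * vstate \<xi> P * vstate \<xi> Q" by (simp add: vstate_def)
qed

lemma indep_sym: "boolean_indep_ops \<xi> F G \<Longrightarrow> boolean_indep_ops \<xi> G F"
  unfolding boolean_indep_ops_def boolean_indep_def by blast

lemma absorb:
  fixes \<xi> :: "'a::real_inner"
  assumes P: "is_orth_proj P" and Q: "is_orth_proj Q" and bi: "boolean_indep_ops \<xi> {P} {Q}"
  shows "P (Q \<xi>) = vstate \<xi> Q *\<^sub>R P \<xi>"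
proof -
  define a where "a = vstate \<xi> P"
  define b where "b = vstate \<xi> Q"
  have f1: "inner (P (Q \<xi>)) \<xi> = a * b" and f2: "inner (Q (P (Q \<xi>))) \<xi> = b * a * b"
    using indep_facts[OF bi] a_def b_def by auto
  have fa: "inner (P \<xi>) \<xi> = a" by (simp add: a_def vstate_def)
  have g1: "inner (P (Q \<xi>)) (P (Q \<xi>)) = b * a * b"
  proof -
    have "inner (P (Q \<xi>)) (P (Q \<xi>)) = inner (P (Q \<xi>)) (Q \<xi>)" by (rule op_norm[OF P])
    also have "\<dots> = inner (Q (P (Q \<xi>))) \<xi>" by (simp add: op_sa[OF Q])
    finally show ?thesis using f2 by simp
  qed
  have g2: "inner (P (Q \<xi>)) (P \<xi>) = a * b" using op_norm[OF P, of "Q \<xi>" \<xi>] f1 by simp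
  have g3: "inner (P \<xi>) (P \<xi>) = a" using op_norm[OF P, of \<xi> \<xi>] fa by simp
  define d where "d = P (Q \<xi>) - b *\<^sub>R P \<xi>"
  have "inner d d = inner (P (Q \<xi>)) (P (Q \<xi>)) - 2 * b * inner (P (Q \<xi>)) (P \<xi>) + b * b * inner (P \<xi>) (P \<xi>)"
    unfolding d_def by (simp add: inner_diff_left inner_diff_right inner_commute[of "P \<xi>" "P (Q \<xi>)"] algebra_simps)
  also have "\<dots> = 0" using g1 g2 g3 by (simp add: algebra_simps)
  finally have "d = 0" by simp
  thus ?thesis unfolding d_def b_def by simp
qed

lemma main_value:
  fixes \<xi> :: "'a::{real_inner, complete_space}"
    and P Q :: "'a \<Rightarrow> 'a" and p q :: real
  assumes n1: "norm \<xi> = 1"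
    and P: "is_orth_proj P" and Q: "is_orth_proj Q"
    and bi: "boolean_indep_ops \<xi> {P} {Q}"
    and p: "p \<in> {0..1}" and q: "q \<in> {0..1}"
    and vp: "vstate \<xi> P = 1 - p" and vq: "vstate \<xi> Q = 1 - q"
  shows "vstate \<xi> (proj_sup P Q) = 1 - (if p = 0 \<or> q = 0 then 0 else 1 / (1/p + 1/q - 1))"
proof -
  define R where "R = proj_sup P Q"
  define M where "M = closure (span (range P \<union> range Q))"
  have R: "is_orth_proj R" and RM: "range R = M" using proj_sup_props[of P Q] R_def M_def by auto
  have xx: "inner \<xi> \<xi> = 1" using n1 norm_eq_1 by blast
  have spanM: "span (range P \<union> range Q) \<subseteq> M" unfolding M_def by (rule closure_subset)
  have PM: "P y \<in> M" for y
  proof -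
    have "P y \<in> range P \<union> range Q" by simp
    hence "P y \<in> span (range P \<union> range Q)" by (rule span_base)
    thus ?thesis by (rule subsetD[OF spanM])
  qed
  have QM: "Q y \<in> M" for y
  proof -
    have "Q y \<in> range P \<union> range Q" by simp
    hence "Q y \<in> span (range P \<union> range Q)" by (rule span_base)
    thus ?thesis by (rule subsetD[OF spanM])
  qed
  have fa: "inner (P \<xi>) \<xi> = 1 - p" and fb: "inner (Q \<xi>) \<xi> = 1 - q" using vp vq unfolding vstate_def by simp_all
  show ?thesis
  proof (cases "p = 0 \<or> q = 0")
    case True
    have "\<xi> \<in> M"
    proof (cases "p = 0")
      case True
      have "inner (P \<xi> - \<xi>) (P \<xi> - \<xi>) = inner (P \<xi>) (P \<xi>) - 2 * inner (P \<xi>) \<xi> + inner \<xi> \<xi>"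
        by (simp add: inner_diff_left inner_diff_right inner_commute[of \<xi> "P \<xi>"])
      also have "\<dots> = 0" using op_norm[OF P, of \<xi> \<xi>] fa xx True by simp
      finally have "P \<xi> = \<xi>" by simp
      thus ?thesis using PM by metis
    next
      case False
      hence q0: "q = 0" using \<open>p = 0 \<or> q = 0\<close> by simp
      have "inner (Q \<xi> - \<xi>) (Q \<xi> - \<xi>) = inner (Q \<xi>) (Q \<xi>) - 2 * inner (Q \<xi>) \<xi> + inner \<xi> \<xi>"
        by (simp add: inner_diff_left inner_diff_right inner_commute[of \<xi> "Q \<xi>"])
      also have "\<dots> = 0" using op_norm[OF Q, of \<xi> \<xi>] fb xx q0 by simp
      finally have "Q \<xi> = \<xi>" by simp
      thus ?thesis using QM by metis
    qed
    hence "R \<xi> = \<xi>" using op_range[OF R] RM by simp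
    thus ?thesis using True xx by (simp add: vstate_def R_def)
  next
    case False
    hence p0: "p \<noteq> 0" and q0: "q \<noteq> 0" by auto
    define s where "s = 1/p + 1/q - 1"
    define r where "r = 1 / s"
    have ip: "1/p \<ge> 1" using p0 p by (simp add: field_simps)
    have iq: "1/q \<ge> 1" using q0 q by (simp add: field_simps)
    have s1: "s \<ge> 1" using ip iq s_def by simp
    have rs: "r * s = 1" using s1 r_def by simp
    have lP: "linear P" and lQ: "linear Q" using op_lin P Q by auto
    have PQ: "P (Q \<xi>) = (1 - q) *\<^sub>R P \<xi>" using absorb[OF P Q bi] vq by simp
    have QP: "Q (P \<xi>) = (1 - p) *\<^sub>R Q \<xi>" using absorb[OF Q P indep_sym[OF bi]] vp by simp
    define x where "x = \<xi> - (1/p) *\<^sub>R (P \<xi> - (1 - p) *\<^sub>R \<xi>) - (1/q) *\<^sub>R (Q \<xi> - (1 - q) *\<^sub>R \<xi>)"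
    have Px: "P x = 0"
    proof -
      have "P x = P \<xi> - (1/p) *\<^sub>R (P \<xi> - (1 - p) *\<^sub>R P \<xi>) - (1/q) *\<^sub>R (P (Q \<xi>) - (1 - q) *\<^sub>R P \<xi>)"
        unfolding x_def by (simp add: linear_diff[OF lP] linear_scale[OF lP] op_idem[OF P])
      also have "\<dots> = P \<xi> - (1/p) *\<^sub>R (p *\<^sub>R P \<xi>)" using PQ by (simp add: algebra_simps)
      also have "\<dots> = 0" using p0 by simp
      finally show ?thesis .
    qed
    have Qx: "Q x = 0"
    proof -
      have "Q x = Q \<xi> - (1/p) *\<^sub>R (Q (P \<xi>) - (1 - p) *\<^sub>R Q \<xi>) - (1/q) *\<^sub>R (Q \<xi> - (1 - q) *\<^sub>R Q \<xi>)"
        unfolding x_def by (simp add: linear_diff[OF lQ] linear_scale[OF lQ] op_idem[OF Q])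
      also have "\<dots> = Q \<xi> - (1/q) *\<^sub>R (q *\<^sub>R Q \<xi>)" using QP by (simp add: algebra_simps)
      also have "\<dots> = 0" using q0 by simp
      finally show ?thesis .
    qed
    have xorth: "inner x m = 0" if "m \<in> M" for m
    proof -
      have "range P \<union> range Q \<subseteq> {m. inner x m = 0}"
      proof
        fix z assume "z \<in> range P \<union> range Q"
        then obtain y where "z = P y \<or> z = Q y" by blast
        thus "z \<in> {m. inner x m = 0}"
          using op_sa[OF P, of x y] op_sa[OF Q, of x y] Px Qx by auto
      qed
      hence "span (range P \<union> range Q) \<subseteq> {m. inner x m = 0}"
        by (rule span_minimal) (rule subspace_hyperplane)
      hence "M \<subseteq> {m. inner x m = 0}" unfolding M_def
        by (rule closure_minimal) (rule closed_hyperplane)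
      thus ?thesis using that by blast
    qed
    have xi1: "inner x \<xi> = 1"
      unfolding x_def using fa fb xx by (simp add: inner_diff_left inner_scaleR_left)
    define w where "w = (r/p) *\<^sub>R P \<xi> + (r/q) *\<^sub>R Q \<xi>"
    have wM: "w \<in> M" unfolding w_def using PM QM spanM
      by (meson span_add span_base span_scale subsetD UnI1 UnI2 rangeI)
    have coef: "r + r * (1 - p) / p + r * (1 - q) / q = 1"
    proof -
      have "r + r * (1 - p) / p + r * (1 - q) / q = r * s" using p0 q0 unfolding s_def
        by (simp add: field_simps)
      thus ?thesis using rs by simp
    qed
    have xiw: "\<xi> = w + r *\<^sub>R x"
    proof -
      have "w + r *\<^sub>R x = (r + r * (1 - p) / p + r * (1 - q) / q) *\<^sub>R \<xi>"
        unfolding w_def x_def using p0 q0 by (simp add: algebra_simps) (simp only: scaleR_add_left[symmetric], rule arg_cong[where f="\<lambda>c. c *\<^sub>R \<xi>"], simp add: field_simps)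
      thus ?thesis using coef by simp
    qed
    have Rw: "R w = w" using op_range[OF R] wM RM by simp
    have Rx: "R x = 0"
    proof -
      have "inner (R x) (R x) = inner x (R (R x))" by (rule op_sa[OF R])
      also have "\<dots> = inner x (R x)" by (simp add: op_idem[OF R])
      also have "\<dots> = 0" using xorth RM by blast
      finally show ?thesis by simp
    qed
    have "R \<xi> = w" using xiw Rw Rx op_lin[OF R]
      by (metis linear_add linear_scale scaleR_zero_right add_0_right)
    hence "vstate \<xi> R = inner w \<xi>" by (simp add: vstate_def)
    also have "\<dots> = inner \<xi> \<xi> - r * inner x \<xi>"
      using xiw by (metis add_diff_cancel_right' inner_diff_left inner_scaleR_left)
    also have "\<dots> = 1 - r" using xx xi1 by simp
    finally show ?thesis using False r_def s_def R_def by simp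
  qed
qed


theorem lemma3p1:
  fixes \<xi> :: "'a::{real_inner, complete_space}"
    and P Q :: "'a \<Rightarrow> 'a" and p q :: real
  assumes "norm \<xi> = 1"
    and "is_orth_proj P" and "is_orth_proj Q"
    and "boolean_indep_ops \<xi> {P} {Q}"
    and "p \<in> {0..1}" and "q \<in> {0..1}"
    and "vstate \<xi> P = 1 - p" and "vstate \<xi> Q = 1 - q"
  shows "(\<exists>r\<in>{0..1}. einv r - 1 = (einv p - 1) + (einv q - 1)) \<and>
         (\<forall>r\<in>{0..1}. einv r - 1 = (einv p - 1) + (einv q - 1) \<longrightarrow>
             vstate \<xi> (proj_sup P Q) = 1 - r)"
proof -
  define r0 where "r0 = (if p = 0 \<or> q = 0 then 0 else 1 / (1/p + 1/q - 1))"
  have rp: "r0 \<in> {0..1} \<and> (\<forall>r\<in>{0..1}. einv r - 1 = (einv p - 1) + (einv q - 1) \<longleftrightarrow> r = r0)"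
    unfolding r0_def by (rule r_part[OF assms(5,6)])
  have v: "vstate \<xi> (proj_sup P Q) = 1 - r0"
    unfolding r0_def by (rule main_value[OF assms])
  show ?thesis
  proof (intro conjI ballI impI)
    show "\<exists>r\<in>{0..1}. einv r - 1 = (einv p - 1) + (einv q - 1)" using rp by blast
  next
    fix r :: real assume "r \<in> {0..1}" "einv r - 1 = (einv p - 1) + (einv q - 1)"
    hence "r = r0" using rp by blast
    thus "vstate \<xi> (proj_sup P Q) = 1 - r" using v by simp
  qed
qed

end
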